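(* Let $P\in\mathbb{C}[y]$ with $\deg P\geq 2$, let $\delta\in\mathbb{C}\setminus\{0\}$, and let $h_1:\mathbb{C}^2\to\mathbb{C}^2$ be the generalized Hénon map $h_1(x,y)=(y,P(y)-\delta x)$. Let $\theta\in(0,2\pi)\setminus\{\frac{\pi}{2},\pi,\frac{3\pi}{2}\}$, let $R_\theta:\mathbb{C}^2\to\mathbb{C}^2$ be the linear map with matrix $\begin{pmatrix}\cos\theta&-\sin\theta\\ \sin\theta&\cos\theta\end{pmatrix}$, let $h_2=R_\theta^{-1}\circ h_1\circ R_\theta$, and let $G=\langle h_1,h_2\rangle$ be the group of holomorphic automorphisms of $\mathbb{C}^2$ generated by $h_1,h_2$. Then there is a nonempty unbounded open set $U\subset\mathcal{F}(G)$ such that for every $(x,y)\in U$ and every sequence $\omega=(\omega_n)_{n\in\mathbb{N}}\in\{h_1,h_2,h_1^{-1},h_2^{-1}\}^{\mathbb{N}}$ for which the reduced word length of $S_k(\omega):=\omega_k\circ\omega_{k-1}\circ\cdots\circ\omega_1$ tends to $\infty$ as $k\to\infty$, we have $\|S_k(\omega)(x,y)\|\to\infty$ as $k\to\infty$.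
   Context: A family $\mathcal{A}$ of holomorphic maps $X\to Y$ is normal if every sequence in $\mathcal{A}$ has a subsequence that either converges uniformly on compact subsets or diverges properly (locally uniformly) to infinity. The Fatou set $\mathcal{F}(G)\subset\mathbb{C}^2$ of $G$ is the largest open subset of $\mathbb{C}^2$ on which the family $G$ (viewed as maps $\mathbb{C}^2\to\mathbb{C}^2$) is normal. The length of $S_k(\omega)$ is its length as a reduced word in the letters $h_1^{\pm1},h_2^{\pm1}$ (after cancelling adjacent inverse pairs). *)

theory Defs
  imports "HOL-Analysis.Analysis" "HOL-Computational_Algebra.Polynomial"
begin

type_synonym C2 = "complex \<times> complex"

definition henon :: "complex poly \<Rightarrow> complex \<Rightarrow> C2 \<Rightarrow> C2" where
  "henon P \<delta> = (\<lambda>(x, y). (y, poly P y - \<delta> * x))"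

definition rot :: "real \<Rightarrow> C2 \<Rightarrow> C2" where
  "rot \<theta> = (\<lambda>(x, y). (complex_of_real (cos \<theta>) * x - complex_of_real (sin \<theta>) * y,
                      complex_of_real (sin \<theta>) * x + complex_of_real (cos \<theta>) * y))"

definition henon2 :: "complex poly \<Rightarrow> complex \<Rightarrow> real \<Rightarrow> C2 \<Rightarrow> C2" where
  "henon2 P \<delta> \<theta> = inv (rot \<theta>) \<circ> henon P \<delta> \<circ> rot \<theta>"

inductive_set gen_group :: "('a \<Rightarrow> 'a) \<Rightarrow> ('a \<Rightarrow> 'a) \<Rightarrow> ('a \<Rightarrow> 'a) set"
  for f g :: "'a \<Rightarrow> 'a" where
  gen_id: "id \<in> gen_group f g"
| gen_f: "h \<in> gen_group f g \<Longrightarrow> f \<circ> h \<in> gen_group f g"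
| gen_finv: "h \<in> gen_group f g \<Longrightarrow> inv f \<circ> h \<in> gen_group f g"
| gen_g: "h \<in> gen_group f g \<Longrightarrow> g \<circ> h \<in> gen_group f g"
| gen_ginv: "h \<in> gen_group f g \<Longrightarrow> inv g \<circ> h \<in> gen_group f g"

definition normal_family_on :: "('a::metric_space \<Rightarrow> 'b::real_normed_vector) set \<Rightarrow> 'a set \<Rightarrow> bool" where
  "normal_family_on A W \<longleftrightarrow>
     (\<forall>f::nat \<Rightarrow> 'a \<Rightarrow> 'b. (\<forall>n. f n \<in> A) \<longrightarrow>
        (\<exists>r. strict_mono r \<and>
           ((\<exists>g. \<forall>K. compact K \<and> K \<subseteq> W \<longrightarrow> uniform_limit K (\<lambda>n. f (r n)) g sequentially)
            \<or> (\<forall>K. compact K \<and> K \<subseteq> W \<longrightarrow>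
                  (\<forall>M. eventually (\<lambda>n. \<forall>z\<in>K. norm (f (r n) z) \<ge> M) sequentially)))))"

definition fatou_set :: "('a::metric_space \<Rightarrow> 'b::real_normed_vector) set \<Rightarrow> 'a set" where
  "fatou_set A = \<Union>{W. open W \<and> normal_family_on A W}"

datatype letter = H1 | H2 | H1inv | H2inv

fun letter_inverse :: "letter \<Rightarrow> letter" where
  "letter_inverse H1 = H1inv"
| "letter_inverse H1inv = H1"
| "letter_inverse H2 = H2inv"
| "letter_inverse H2inv = H2"

fun reduce_word :: "letter list \<Rightarrow> letter list" where
  "reduce_word [] = []"
| "reduce_word (a # w) =
     (case reduce_word w of
        [] \<Rightarrow> [a]
      | b # v \<Rightarrow> (if b = letter_inverse a then v else a # b # v))"

definition letter_map :: "complex poly \<Rightarrow> complex \<Rightarrow> real \<Rightarrow> letter \<Rightarrow> C2 \<Rightarrow> C2" where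
  "letter_map P \<delta> \<theta> l = (case l of
      H1 \<Rightarrow> henon P \<delta>
    | H2 \<Rightarrow> henon2 P \<delta> \<theta>
    | H1inv \<Rightarrow> inv (henon P \<delta>)
    | H2inv \<Rightarrow> inv (henon2 P \<delta> \<theta>))"

text \<open>The word of S_k(omega) = omega_k o ... o omega_1 (here omega_i is omega (i-1)),
  written left to right.\<close>
definition S_word :: "(nat \<Rightarrow> letter) \<Rightarrow> nat \<Rightarrow> letter list" where
  "S_word \<omega> k = rev (map \<omega> [0..<k])"

fun S_map :: "complex poly \<Rightarrow> complex \<Rightarrow> real \<Rightarrow> (nat \<Rightarrow> letter) \<Rightarrow> nat \<Rightarrow> C2 \<Rightarrow> C2" where
  "S_map P \<delta> \<theta> \<omega> 0 = id"
| "S_map P \<delta> \<theta> \<omega> (Suc k) = letter_map P \<delta> \<theta> (\<omega> k) \<circ> S_map P \<delta> \<theta> \<omega> k"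

end

theory Submission imports Defs "HOL-Computational_Algebra.Fundamental_Theorem_Algebra" "HOL-Library.Infinite_Set"
begin


lemma poly_growth:
  fixes Q :: "complex poly"
  assumes "degree Q \<ge> 2"
  shows "\<exists>Y\<ge>1. \<forall>y. Y \<le> norm y \<longrightarrow> B * norm y \<le> norm (poly Q y)"
proof -
  obtain a Q1 where Q: "Q = pCons a Q1" by (cases Q) auto
  have "Q1 \<noteq> 0" using assms Q by auto
  hence d1: "degree Q1 \<ge> 1" using assms Q by (simp add: degree_pCons_eq)
  obtain b Q2 where Q1: "Q1 = pCons b Q2" by (cases Q1) auto
  have "Q2 \<noteq> 0" using d1 Q1 by auto
  from poly_infinity[OF this, of "B + norm a" b] obtain r where
    r: "\<And>z. r \<le> norm z \<Longrightarrow> B + norm a \<le> norm (poly Q1 z)" using Q1 by auto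
  show ?thesis
  proof (intro exI[of _ "max r 1"] conjI allI impI)
    fix y :: complex assume y: "max r 1 \<le> norm y"
    have h: "B + norm a \<le> norm (poly Q1 y)" using r y by auto
    have "poly Q y - a = y * poly Q1 y" using Q by simp
    hence n1: "norm (y * poly Q1 y) \<le> norm (poly Q y) + norm a"
      using norm_triangle_ineq4[of "poly Q y" a] by simp
    have n2: "norm y * (B + norm a) \<le> norm y * norm (poly Q1 y)"
      using h by (simp add: mult_left_mono)
    have n3: "norm a \<le> norm y * norm a" using y
      by (simp add: mult_le_cancel_right1)
    have "norm (y * poly Q1 y) = norm y * norm (poly Q1 y)" by (rule norm_mult)
    hence "norm y * B + norm y * norm a \<le> norm (poly Q y) + norm a"
      using n1 n2 by (simp add: distrib_left)
    thus "B * norm y \<le> norm (poly Q y)" using n3 by (simp add: mult.commute)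
  qed simp
qed


definition sw :: "C2 \<Rightarrow> C2" where "sw = (\<lambda>(x,y). (y,x))"
definition hinv :: "complex poly \<Rightarrow> complex \<Rightarrow> C2 \<Rightarrow> C2" where
  "hinv P \<delta> = (\<lambda>(x,y). ((poly P x - y) / \<delta>, x))"

lemma henon_hinv: "\<delta> \<noteq> 0 \<Longrightarrow> henon P \<delta> \<circ> hinv P \<delta> = id"
  by (auto simp: fun_eq_iff henon_def hinv_def)
lemma hinv_henon: "\<delta> \<noteq> 0 \<Longrightarrow> hinv P \<delta> \<circ> henon P \<delta> = id"
  by (auto simp: fun_eq_iff henon_def hinv_def field_simps)
lemma inv_henon: "\<delta> \<noteq> 0 \<Longrightarrow> inv (henon P \<delta>) = hinv P \<delta>"
  by (rule inv_unique_comp[OF henon_hinv hinv_henon])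

lemma cs_one: "complex_of_real (cos \<phi>) * complex_of_real (cos \<phi>) + complex_of_real (sin \<phi>) * complex_of_real (sin \<phi>) = 1"
proof -
  have "complex_of_real (cos \<phi>) * complex_of_real (cos \<phi>) + complex_of_real (sin \<phi>) * complex_of_real (sin \<phi>)
     = complex_of_real (cos \<phi> * cos \<phi> + sin \<phi> * sin \<phi>)" by (simp only: of_real_add of_real_mult)
  also have "cos \<phi> * cos \<phi> + sin \<phi> * sin \<phi> = 1" using sin_cos_squared_add3[of \<phi>] by simp
  finally show ?thesis by simp
qed

lemma alg1: "pp*pp + qq*qq = (1::complex) \<Longrightarrow> pp*(pp*x - qq*y) + qq*(qq*x + pp*y) = x"
proof -
  assume e: "pp*pp + qq*qq = (1::complex)"
  have "pp*(pp*x - qq*y) + qq*(qq*x + pp*y) = (pp*pp + qq*qq) * x" by (simp add: algebra_simps)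
  thus ?thesis using e by simp
qed

lemma alg2: "pp*pp + qq*qq = (1::complex) \<Longrightarrow> pp*(qq*x + pp*y) - qq*(pp*x - qq*y) = y"
proof -
  assume e: "pp*pp + qq*qq = (1::complex)"
  have "pp*(qq*x + pp*y) - qq*(pp*x - qq*y) = (pp*pp + qq*qq) * y" by (simp add: algebra_simps)
  thus ?thesis using e by simp
qed

lemma rot_rot: "rot (-\<phi>) \<circ> rot \<phi> = id"
proof (rule ext)
  fix z :: C2
  obtain x y where z: "z = (x,y)" by (cases z)
  have "rot (-\<phi>) (rot \<phi> (x,y)) = (x,y)"
    using alg1[OF cs_one[of \<phi>], of x y] alg2[OF cs_one[of \<phi>], of x y]
    by (simp add: rot_def algebra_simps)
  thus "(rot (-\<phi>) \<circ> rot \<phi>) z = id z" using z by simp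
qed



lemma norm_rot: "norm (rot \<phi> z) = norm z"
proof -
  obtain x y where z: "z = (x,y)" by (cases z)
  have "(norm (complex_of_real (cos \<phi>) * x - complex_of_real (sin \<phi>) * y))\<^sup>2 +
        (norm (complex_of_real (sin \<phi>) * x + complex_of_real (cos \<phi>) * y))\<^sup>2
        = (cos \<phi>)\<^sup>2 * ((norm x)\<^sup>2 + (norm y)\<^sup>2) + (sin \<phi>)\<^sup>2 * ((norm x)\<^sup>2 + (norm y)\<^sup>2)"
    unfolding cmod_power2 by (simp add: power2_eq_square algebra_simps)
  also have "\<dots> = (norm x)\<^sup>2 + (norm y)\<^sup>2"
    by (metis distrib_right mult_1 sin_cos_squared_add add.commute)
  finally show ?thesis by (simp add: z rot_def norm_Pair)
qed

lemma norm_sw: "norm (sw z) = norm z"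
  by (cases z) (simp add: sw_def norm_Pair add.commute)

lemma rot_rot2: "rot \<phi> \<circ> rot (-\<phi>) = id"
  using rot_rot[of "-\<phi>"] by simp

lemma inv_rot: "inv (rot \<phi>) = rot (-\<phi>)"
  by (rule inv_unique_comp[OF rot_rot2 rot_rot])

lemma rot_rot': "rot \<phi> (rot (-\<phi>) z) = z"
  using pointfree_idE[OF rot_rot2] by simp

lemma henon2_eq: "henon2 P \<delta> \<theta> = rot (-\<theta>) \<circ> henon P \<delta> \<circ> rot \<theta>"
  by (simp add: henon2_def inv_rot)

lemma inv_henon2: "\<delta> \<noteq> 0 \<Longrightarrow> inv (henon2 P \<delta> \<theta>) = rot (-\<theta>) \<circ> hinv P \<delta> \<circ> rot \<theta>"
  unfolding henon2_eq
  by (rule inv_unique_comp)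
     (simp_all add: fun_eq_iff rot_rot' pointfree_idE[OF henon_hinv] pointfree_idE[OF hinv_henon]
        pointfree_idE[OF rot_rot])

lemma sw_hinv: "\<delta> \<noteq> 0 \<Longrightarrow> sw (hinv P \<delta> z) = henon (smult (1/\<delta>) P) (1/\<delta>) (sw z)"
  by (cases z) (simp add: sw_def hinv_def henon_def diff_divide_distrib)



definition G1 :: "real \<Rightarrow> real \<Rightarrow> C2 \<Rightarrow> bool" where
  "G1 K r z \<longleftrightarrow> norm (fst z) \<le> K * norm (snd z) \<and> r \<le> norm z"

lemma core:
  fixes Q :: "complex poly" and D :: complex and K e r :: real
  assumes K: "K > 0" and e: "e > 0"
    and gr: "\<And>y. r / (K+1) \<le> norm y \<Longrightarrow> (max (1/e) (2*(K+1)) + norm D * K) * norm y \<le> norm (poly Q y)"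
    and g: "G1 K r z"
  shows "G1 e r (henon Q D z) \<and> 2 * norm z \<le> norm (henon Q D z)"
proof -
  obtain x y where z: "z = (x,y)" by (cases z)
  have hx: "norm x \<le> K * norm y" and hr: "r \<le> norm z" using g z by (auto simp: G1_def)
  have "norm z \<le> norm x + norm y" using z norm_Pair_le by simp
  also have "\<dots> \<le> K * norm y + 1 * norm y" using hx by simp
  also have "\<dots> = (K+1) * norm y" by (simp only: distrib_right)
  finally have nz: "norm z \<le> (K+1) * norm y" .
  have "r \<le> norm y * (K+1)" using hr nz by (simp add: mult.commute)
  hence ry: "r / (K+1) \<le> norm y" using K by (simp add: pos_divide_le_eq)
  define M where "M = max (1/e) (2*(K+1))"
  have P: "(M + norm D * K) * norm y \<le> norm (poly Q y)" using gr[OF ry] unfolding M_def .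
  have "norm (D * x) = norm D * norm x" by (rule norm_mult)
  also have "\<dots> \<le> norm D * (K * norm y)" using hx by (simp add: mult_left_mono)
  finally have Dx: "norm (D * x) \<le> norm D * K * norm y" by (simp only: mult.assoc)
  have tri: "norm (poly Q y) - norm (D * x) \<le> norm (poly Q y - D * x)"
    by (rule norm_triangle_ineq2)
  have "(M + norm D * K) * norm y = M * norm y + norm D * K * norm y" by (simp only: distrib_right)
  hence big: "M * norm y \<le> norm (poly Q y - D * x)"
    using P Dx tri by linarith
  have M1: "1/e \<le> M" and M2: "2*(K+1) \<le> M" unfolding M_def by auto
  have ny: "norm y \<le> e * norm (poly Q y - D * x)"
  proof -
    have "norm y = e * ((1/e) * norm y)" using e by simp
    also have "\<dots> \<le> e * (M * norm y)" using M1 e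
      by (intro mult_left_mono mult_right_mono) auto
    also have "\<dots> \<le> e * norm (poly Q y - D * x)" using big e by (intro mult_left_mono) auto
    finally show ?thesis .
  qed
  have "2 * norm z \<le> 2 * ((K+1) * norm y)" using nz by simp
  also have "\<dots> = (2 * (K+1)) * norm y" by (simp only: mult.assoc)
  also have "\<dots> \<le> M * norm y" using M2 by (intro mult_right_mono) auto
  also have "\<dots> \<le> norm (poly Q y - D * x)" by (rule big)
  also have "\<dots> \<le> norm (henon Q D z)" by (simp add: z henon_def norm_snd_le)
  finally have n2: "2 * norm z \<le> norm (henon Q D z)" .
  moreover have "r \<le> norm (henon Q D z)" using n2 hr norm_ge_zero[of z] by linarith
  ultimately show ?thesis using ny by (simp add: G1_def z henon_def)
qed

definition lin :: "real \<Rightarrow> real \<Rightarrow> real \<Rightarrow> real \<Rightarrow> C2 \<Rightarrow> C2" where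
  "lin a b c d = (\<lambda>(x,y). (of_real a * x + of_real b * y, of_real c * x + of_real d * y))"

lemma lin_est:
  assumes m: "m > 0" "m \<le> \<bar>a\<bar>" "m \<le> \<bar>b\<bar>" "m \<le> \<bar>c\<bar>" "m \<le> \<bar>d\<bar>"
    "\<bar>a\<bar> \<le> 1" "\<bar>b\<bar> \<le> 1" "\<bar>c\<bar> \<le> 1" "\<bar>d\<bar> \<le> 1"
    and h: "norm (fst w) \<le> (m/2) * norm (snd w)"
  shows "norm (fst (lin a b c d w)) \<le> (4/m) * norm (snd (lin a b c d w))"
proof -
  obtain x y where w: "w = (x,y)" by (cases w)
  have hx: "norm x \<le> (m/2) * norm y" using h w by simp
  have m1: "m \<le> 1" using m by simp
  have na: "norm (of_real a * x) = \<bar>a\<bar> * norm x" by (simp add: norm_mult)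
  have nb: "norm (of_real b * y) = \<bar>b\<bar> * norm y" by (simp add: norm_mult)
  have nc: "norm (of_real c * x) = \<bar>c\<bar> * norm x" by (simp add: norm_mult)
  have nd: "norm (of_real d * y) = \<bar>d\<bar> * norm y" by (simp add: norm_mult)
  have "norm (of_real a * x + of_real b * y) \<le> \<bar>a\<bar> * norm x + \<bar>b\<bar> * norm y"
    using norm_triangle_ineq[of "of_real a * x" "of_real b * y"] na nb by simp
  also have "\<dots> \<le> 1 * ((m/2) * norm y) + 1 * norm y"
    using m hx by (intro add_mono mult_mono) auto
  also have "\<dots> \<le> 2 * norm y" using m1 mult_right_mono[of m 1 "norm y"] norm_ge_zero[of y] by (simp, linarith)
  finally have A: "norm (of_real a * x + of_real b * y) \<le> 2 * norm y" .
  have "norm (of_real d * y) - norm (of_real c * x) \<le> norm (of_real c * x + of_real d * y)"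
    using norm_diff_ineq[of "of_real d * y" "of_real c * x"] by (simp add: add.commute)
  hence B0: "\<bar>d\<bar> * norm y - \<bar>c\<bar> * norm x \<le> norm (of_real c * x + of_real d * y)" using nc nd by simp
  moreover have "\<bar>c\<bar> * norm x \<le> 1 * ((m/2) * norm y)" using m hx by (intro mult_mono) auto
  moreover have "m * norm y \<le> \<bar>d\<bar> * norm y" using m by (simp add: mult_right_mono)
  ultimately have B: "(m/2) * norm y \<le> norm (of_real c * x + of_real d * y)" by simp
  have "2 * norm y = (4/m) * ((m/2) * norm y)" using m by simp
  also have "\<dots> \<le> (4/m) * norm (of_real c * x + of_real d * y)" using B m by (intro mult_left_mono) auto
  finally show ?thesis using A w by (simp add: lin_def)
qed



definition T :: "real \<Rightarrow> letter \<Rightarrow> C2 \<Rightarrow> C2" where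
  "T \<theta> l = (case l of H1 \<Rightarrow> id | H1inv \<Rightarrow> sw | H2 \<Rightarrow> rot \<theta> | H2inv \<Rightarrow> sw \<circ> rot \<theta>)"

lemma norm_T: "norm (T \<theta> l z) = norm z"
  by (cases l) (auto simp: T_def norm_sw norm_rot)

lemma G1_mono: "e \<le> K \<Longrightarrow> G1 e r z \<Longrightarrow> G1 K r z"
  unfolding G1_def using mult_right_mono[of e K "norm (snd z)"] by auto

lemma G1_lin:
  assumes "m > 0" "m \<le> \<bar>a\<bar>" "m \<le> \<bar>b\<bar>" "m \<le> \<bar>c\<bar>" "m \<le> \<bar>d\<bar>"
    "\<bar>a\<bar> \<le> 1" "\<bar>b\<bar> \<le> 1" "\<bar>c\<bar> \<le> 1" "\<bar>d\<bar> \<le> 1"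
    and g: "G1 (m/2) r w" and w': "w' = lin a b c d w" and n: "norm w' = norm w"
  shows "G1 (4/m) r w'"
  using lin_est[OF assms(1-9), of w] g w' n unfolding G1_def by auto

lemma T_ids:
  fixes x y :: complex and \<theta> :: real
  defines "c \<equiv> cos \<theta>" and "s \<equiv> sin \<theta>"
  shows
  "T \<theta> H2 (x,y) = lin c (-s) s c (T \<theta> H1 (x,y))"
  "T \<theta> H2inv (x,y) = lin s c c (-s) (T \<theta> H1 (x,y))"
  "T \<theta> H2 (x,y) = lin (-s) c c s (T \<theta> H1inv (x,y))"
  "T \<theta> H2inv (x,y) = lin c s (-s) c (T \<theta> H1inv (x,y))"
  "T \<theta> H1 (x,y) = lin c s (-s) c (T \<theta> H2 (x,y))"
  "T \<theta> H1inv (x,y) = lin (-s) c c s (T \<theta> H2 (x,y))"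
  "T \<theta> H1 (x,y) = lin s c c (-s) (T \<theta> H2inv (x,y))"
  "T \<theta> H1inv (x,y) = lin c (-s) s c (T \<theta> H2inv (x,y))"
proof -
  have e: "of_real c * of_real c + of_real s * of_real s = (1::complex)"
    unfolding c_def s_def by (metis of_real_1 of_real_add of_real_mult sin_cos_squared_add3)
  show "T \<theta> H2 (x,y) = lin c (-s) s c (T \<theta> H1 (x,y))"
    by (simp add: T_def lin_def rot_def c_def s_def)
  show "T \<theta> H2inv (x,y) = lin s c c (-s) (T \<theta> H1 (x,y))"
    by (simp add: T_def lin_def rot_def sw_def c_def s_def)
  show "T \<theta> H2 (x,y) = lin (-s) c c s (T \<theta> H1inv (x,y))"
    by (simp add: T_def lin_def rot_def sw_def c_def s_def algebra_simps)
  show "T \<theta> H2inv (x,y) = lin c s (-s) c (T \<theta> H1inv (x,y))"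
    by (simp add: T_def lin_def rot_def sw_def c_def s_def algebra_simps)
  show "T \<theta> H1 (x,y) = lin c s (-s) c (T \<theta> H2 (x,y))"
    using alg1[OF cs_one[of \<theta>], of x y] alg2[OF cs_one[of \<theta>], of x y]
    by (simp add: T_def lin_def rot_def sw_def c_def s_def algebra_simps)
  show "T \<theta> H1inv (x,y) = lin (-s) c c s (T \<theta> H2 (x,y))"
    using alg1[OF cs_one[of \<theta>], of x y] alg2[OF cs_one[of \<theta>], of x y]
    by (simp add: T_def lin_def rot_def sw_def c_def s_def algebra_simps)
  show "T \<theta> H1 (x,y) = lin s c c (-s) (T \<theta> H2inv (x,y))"
    using alg1[OF cs_one[of \<theta>], of x y] alg2[OF cs_one[of \<theta>], of x y]
    by (simp add: T_def lin_def rot_def sw_def c_def s_def algebra_simps)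
  show "T \<theta> H1inv (x,y) = lin c (-s) s c (T \<theta> H2inv (x,y))"
    using alg1[OF cs_one[of \<theta>], of x y] alg2[OF cs_one[of \<theta>], of x y]
    by (simp add: T_def lin_def rot_def sw_def c_def s_def algebra_simps)
qed



lemma compat:
  assumes s: "sin \<theta> \<noteq> 0" and c: "cos \<theta> \<noteq> 0" and md: "m = min \<bar>cos \<theta>\<bar> \<bar>sin \<theta>\<bar>"
    and ab: "a \<noteq> letter_inverse b" and g: "G1 (m/2) r (T \<theta> b z)"
  shows "G1 (4/m) r (T \<theta> a z)"
proof -
  obtain x y where z: "z = (x,y)" by (cases z)
  have mpos: "m > 0" using s c md by auto
  have b1: "m \<le> \<bar>cos \<theta>\<bar>" "m \<le> \<bar>sin \<theta>\<bar>" "\<bar>cos \<theta>\<bar> \<le> 1" "\<bar>sin \<theta>\<bar> \<le> 1"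
    using md by (auto simp: abs_cos_le_one abs_sin_le_one)
  hence m1: "m \<le> 1" by linarith
  have "1 \<le> 4/m" using mpos m1 by (simp add: le_divide_eq)
  moreover have "m/2 \<le> 1" using m1 by simp
  ultimately have mle: "m/2 \<le> 4/m" by linarith
  have n: "norm (T \<theta> a z) = norm (T \<theta> b z)" by (simp add: norm_T)
  have L: "G1 (4/m) r w'" if "w' = lin p q u v w" "G1 (m/2) r w" "m \<le> \<bar>p\<bar>" "m \<le> \<bar>q\<bar>" "m \<le> \<bar>u\<bar>" "m \<le> \<bar>v\<bar>"
    "\<bar>p\<bar> \<le> 1" "\<bar>q\<bar> \<le> 1" "\<bar>u\<bar> \<le> 1" "\<bar>v\<bar> \<le> 1" "norm w' = norm w" for w' w p q u v
    by (rule G1_lin[OF mpos that(3-10) that(2) that(1) that(11)])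
  have g': "G1 (m/2) r (T \<theta> b (x,y))" using g z by simp
  show ?thesis
    unfolding z using ab g'
    by (cases a; cases b)
       (auto intro: G1_mono[OF mle] L[OF T_ids(1)] L[OF T_ids(2)]
          L[OF T_ids(3)] L[OF T_ids(4)] L[OF T_ids(5)]
          L[OF T_ids(6)] L[OF T_ids(7)] L[OF T_ids(8)] simp: b1 norm_T)
qed



lemma step:
  assumes d: "\<delta> \<noteq> 0" and K: "K > 0" and e: "e > 0"
    and gr1: "\<And>y. r / (K+1) \<le> norm y \<Longrightarrow> (max (1/e) (2*(K+1)) + norm \<delta> * K) * norm y \<le> norm (poly P y)"
    and gr2: "\<And>y. r / (K+1) \<le> norm y \<Longrightarrow> (max (1/e) (2*(K+1)) + norm (1/\<delta>) * K) * norm y \<le> norm (poly (smult (1/\<delta>) P) y)"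
    and g: "G1 K r (T \<theta> l z)"
  shows "G1 e r (T \<theta> l (letter_map P \<delta> \<theta> l z)) \<and> 2 * norm z \<le> norm (letter_map P \<delta> \<theta> l z)"
proof (cases l)
  case H1
  have g': "G1 K r z" using g H1 by (simp add: T_def)
  show ?thesis using core[OF K e gr1 g'] H1 by (simp add: letter_map_def T_def)
next
  case H1inv
  have g': "G1 K r (sw z)" using g H1inv by (simp add: T_def)
  have eq: "sw (hinv P \<delta> z) = henon (smult (1/\<delta>) P) (1/\<delta>) (sw z)" by (rule sw_hinv[OF d])
  have "norm (hinv P \<delta> z) = norm (sw (hinv P \<delta> z))" by (simp add: norm_sw)
  then show ?thesis using core[OF K e gr2 g'] H1inv eq
    by (simp add: letter_map_def T_def inv_henon[OF d] norm_sw)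
next
  case H2
  have g': "G1 K r (rot \<theta> z)" using g H2 by (simp add: T_def)
  show ?thesis using core[OF K e gr1 g'] H2
    by (simp add: letter_map_def T_def henon2_eq rot_rot' norm_rot)
next
  case H2inv
  have g': "G1 K r (sw (rot \<theta> z))" using g H2inv by (simp add: T_def)
  have eq: "sw (hinv P \<delta> (rot \<theta> z)) = henon (smult (1/\<delta>) P) (1/\<delta>) (sw (rot \<theta> z))" by (rule sw_hinv[OF d])
  have "norm (hinv P \<delta> (rot \<theta> z)) = norm (sw (hinv P \<delta> (rot \<theta> z)))" by (simp add: norm_sw)
  then show ?thesis using core[OF K e gr2 g'] H2inv eq
    by (simp add: letter_map_def T_def inv_henon2[OF d] rot_rot' norm_rot norm_sw)
qed



fun word_map :: "complex poly \<Rightarrow> complex \<Rightarrow> real \<Rightarrow> letter list \<Rightarrow> C2 \<Rightarrow> C2" where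
  "word_map P \<delta> \<theta> [] = id"
| "word_map P \<delta> \<theta> (a # w) = letter_map P \<delta> \<theta> a \<circ> word_map P \<delta> \<theta> w"

fun reduced :: "letter list \<Rightarrow> bool" where
  "reduced (a # b # v) = (b \<noteq> letter_inverse a \<and> reduced (b # v))"
| "reduced _ = True"

lemma reduced_tl: "reduced (b # v) \<Longrightarrow> reduced v"
  by (cases v) auto

lemma reduce_reduced: "reduced (reduce_word w)"
proof (induction w)
  case Nil then show ?case by simp
next
  case (Cons a w)
  then show ?case
    by (cases "reduce_word w") (auto dest: reduced_tl)
qed

lemma inv_inv_letter: "letter_inverse (letter_inverse a) = a"
  by (cases a) auto

lemma letter_cancel:
  assumes d: "\<delta> \<noteq> 0"
  shows "letter_map P \<delta> \<theta> a \<circ> letter_map P \<delta> \<theta> (letter_inverse a) = id"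
proof (cases a)
  case H1
  then show ?thesis by (simp add: letter_map_def inv_henon[OF d] henon_hinv[OF d])
next
  case H1inv
  then show ?thesis by (simp add: letter_map_def inv_henon[OF d] hinv_henon[OF d])
next
  case H2
  have "letter_map P \<delta> \<theta> a \<circ> letter_map P \<delta> \<theta> (letter_inverse a)
      = henon2 P \<delta> \<theta> \<circ> (rot (-\<theta>) \<circ> hinv P \<delta> \<circ> rot \<theta>)"
    using H2 by (simp add: letter_map_def inv_henon2[OF d])
  also have "\<dots> = id"
    by (simp add: henon2_eq fun_eq_iff rot_rot' pointfree_idE[OF henon_hinv[OF d]] pointfree_idE[OF rot_rot])
  finally show ?thesis .
next
  case H2inv
  have "letter_map P \<delta> \<theta> a \<circ> letter_map P \<delta> \<theta> (letter_inverse a)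
      = (rot (-\<theta>) \<circ> hinv P \<delta> \<circ> rot \<theta>) \<circ> henon2 P \<delta> \<theta>"
    using H2inv by (simp add: letter_map_def inv_henon2[OF d])
  also have "\<dots> = id"
    by (simp add: henon2_eq fun_eq_iff rot_rot' pointfree_idE[OF hinv_henon[OF d]] pointfree_idE[OF rot_rot])
  finally show ?thesis .
qed

lemma word_map_reduce:
  assumes d: "\<delta> \<noteq> 0"
  shows "word_map P \<delta> \<theta> (reduce_word w) = word_map P \<delta> \<theta> w"
proof (induction w)
  case Nil then show ?case by simp
next
  case (Cons a w)
  show ?case
  proof (cases "reduce_word w")
    case Nil
    have "word_map P \<delta> \<theta> w = id" using Cons.IH Nil by (simp add: id_def)
    then show ?thesis using Nil by simp
  next
    case (Cons b v)
    have IHw: "word_map P \<delta> \<theta> w = letter_map P \<delta> \<theta> b \<circ> word_map P \<delta> \<theta> v"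
      using Cons.IH[symmetric] Cons by (simp add: comp_def)
    show ?thesis
    proof (cases "b = letter_inverse a")
      case True
      have "reduce_word (a # w) = v" using Cons True by simp
      moreover have "letter_map P \<delta> \<theta> a \<circ> (letter_map P \<delta> \<theta> b \<circ> word_map P \<delta> \<theta> v) = word_map P \<delta> \<theta> v"
        using letter_cancel[OF d, of P \<theta> a] True by (simp add: comp_assoc[symmetric])
      ultimately show ?thesis using IHw by simp
    next
      case False
      have "reduce_word (a # w) = a # b # v" using Cons False by simp
      then show ?thesis using IHw by simp
    qed
  qed
qed

lemma S_word_Suc: "S_word \<omega> (Suc k) = \<omega> k # S_word \<omega> k"
  by (simp add: S_word_def)

lemma S_map_word: "S_map P \<delta> \<theta> \<omega> k = word_map P \<delta> \<theta> (S_word \<omega> k)"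
  by (induction k) (simp_all add: S_word_Suc S_word_def)

lemma gen_group_word:
  assumes "h \<in> gen_group (henon P \<delta>) (henon2 P \<delta> \<theta>)"
  shows "\<exists>w. h = word_map P \<delta> \<theta> w"
  using assms
proof (induction rule: gen_group.induct)
  case gen_id
  then show ?case by (intro exI[of _ "[]"]) simp
next
  case (gen_f h)
  then obtain w where "h = word_map P \<delta> \<theta> w" by blast
  then show ?case by (intro exI[of _ "H1 # w"]) (simp add: letter_map_def)
next
  case (gen_finv h)
  then obtain w where "h = word_map P \<delta> \<theta> w" by blast
  then show ?case by (intro exI[of _ "H1inv # w"]) (simp add: letter_map_def)
next
  case (gen_g h)
  then obtain w where "h = word_map P \<delta> \<theta> w" by blast
  then show ?case by (intro exI[of _ "H2 # w"]) (simp add: letter_map_def)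
next
  case (gen_ginv h)
  then obtain w where "h = word_map P \<delta> \<theta> w" by blast
  then show ?case by (intro exI[of _ "H2inv # w"]) (simp add: letter_map_def)
qed

lemma chain:
  assumes stepA: "\<And>l z. G1 K r (T \<theta> l z) \<Longrightarrow>
        G1 e r (T \<theta> l (letter_map P \<delta> \<theta> l z)) \<and> 2 * norm z \<le> norm (letter_map P \<delta> \<theta> l z)"
    and compatA: "\<And>a b z. a \<noteq> letter_inverse b \<Longrightarrow> G1 e r (T \<theta> b z) \<Longrightarrow> G1 K r (T \<theta> a z)"
    and good: "\<And>l. G1 K r (T \<theta> l z)"
  shows "reduced w \<Longrightarrow> w \<noteq> [] \<Longrightarrow>
     G1 e r (T \<theta> (hd w) (word_map P \<delta> \<theta> w z)) \<and> 2 ^ length w * norm z \<le> norm (word_map P \<delta> \<theta> w z)"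
proof (induction w)
  case Nil then show ?case by simp
next
  case (Cons a v)
  show ?case
  proof (cases v)
    case Nil
    then show ?thesis using stepA[OF good[of a]] by simp
  next
    case (Cons b v')
    have red: "b \<noteq> letter_inverse a" "reduced v" using Cons.prems Cons by auto
    have ab: "a \<noteq> letter_inverse b" using red(1) inv_inv_letter by metis
    have IH: "G1 e r (T \<theta> b (word_map P \<delta> \<theta> v z)) \<and> 2 ^ length v * norm z \<le> norm (word_map P \<delta> \<theta> v z)"
      using Cons.IH red Cons by simp
    have s: "G1 e r (T \<theta> a (letter_map P \<delta> \<theta> a (word_map P \<delta> \<theta> v z))) \<and>
         2 * norm (word_map P \<delta> \<theta> v z) \<le> norm (letter_map P \<delta> \<theta> a (word_map P \<delta> \<theta> v z))"
      using stepA compatA[OF ab] IH by blast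
    have "2 ^ length (a # v) * norm z = 2 * (2 ^ length v * norm z)" by simp
    also have "\<dots> \<le> 2 * norm (word_map P \<delta> \<theta> v z)" using IH by simp
    finally show ?thesis using s by simp
  qed
qed

lemma chain_all:
  assumes stepA: "\<And>l z. G1 K r (T \<theta> l z) \<Longrightarrow>
        G1 e r (T \<theta> l (letter_map P \<delta> \<theta> l z)) \<and> 2 * norm z \<le> norm (letter_map P \<delta> \<theta> l z)"
    and compatA: "\<And>a b z. a \<noteq> letter_inverse b \<Longrightarrow> G1 e r (T \<theta> b z) \<Longrightarrow> G1 K r (T \<theta> a z)"
    and good: "\<And>l. G1 K r (T \<theta> l z)" and red: "reduced w"
  shows "2 ^ length w * norm z \<le> norm (word_map P \<delta> \<theta> w z)"
  using chain[OF stepA compatA good red] by (cases "w = []") auto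

lemma finite_letter: "finite (UNIV :: letter set)"
proof -
  have "UNIV = {H1, H2, H1inv, H2inv}" using letter.exhaust by auto
  then show ?thesis by (metis finite.emptyI finite.insertI)
qed



lemma sin_nz:
  assumes "0 < \<theta>" "\<theta> < 2 * pi" "\<theta> \<noteq> pi"
  shows "sin \<theta> \<noteq> 0"
proof
  assume "sin \<theta> = 0"
  then obtain i :: int where i: "\<theta> = of_int i * pi" by (auto simp: sin_zero_iff_int2)
  have "0 < of_int i * pi" using assms i by simp
  hence i0: "0 < (of_int i :: real)" using pi_gt_zero by (simp add: zero_less_mult_iff)
  have "of_int i * pi < 2 * pi" using assms i by simp
  hence i2: "of_int i < (2::real)" using pi_gt_zero by (simp add: mult_less_cancel_right)
  from i0 i2 have "i = 1" by linarith
  thus False using i assms by simp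
qed

lemma cos_nz:
  assumes "0 < \<theta>" "\<theta> < 2 * pi" "\<theta> \<noteq> pi/2" "\<theta> \<noteq> 3 * pi / 2"
  shows "cos \<theta> \<noteq> 0"
proof
  assume "cos \<theta> = 0"
  then obtain n :: int where n: "\<theta> = of_int n * pi + pi/2" by (auto simp: cos_zero_iff_int2)
  have e: "\<theta> = (of_int n + 1/2) * pi" using n by (simp add: algebra_simps)
  have "0 < (of_int n + 1/2) * pi" using assms e by simp
  hence a: "0 < of_int n + (1/2::real)" using pi_gt_zero by (simp add: zero_less_mult_iff)
  have "(of_int n + 1/2) * pi < 2 * pi" using assms e by simp
  hence b: "of_int n + 1/2 < (2::real)" using pi_gt_zero by (simp add: mult_less_cancel_right)
  from a b have "n = 0 \<or> n = 1" by linarith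
  thus False using n assms by (auto simp: algebra_simps)
qed

lemma norm_pt1: "norm (complex_of_real a * complex_of_real t - complex_of_real b * (\<i> * complex_of_real t)) = \<bar>t\<bar> * sqrt (a\<^sup>2 + b\<^sup>2)"
proof -
  have "complex_of_real a * complex_of_real t - complex_of_real b * (\<i> * complex_of_real t) = Complex (a*t) (-(b*t))"
    by (simp add: complex_eq_iff)
  hence "norm (complex_of_real a * complex_of_real t - complex_of_real b * (\<i> * complex_of_real t)) = sqrt (t\<^sup>2 * (a\<^sup>2 + b\<^sup>2))"
    by (simp add: complex_norm power_mult_distrib algebra_simps)
  also have "\<dots> = \<bar>t\<bar> * sqrt (a\<^sup>2 + b\<^sup>2)" by (simp add: real_sqrt_mult)
  finally show ?thesis .
qed

lemma norm_pt2: "norm (complex_of_real a * complex_of_real t + complex_of_real b * (\<i> * complex_of_real t)) = \<bar>t\<bar> * sqrt (a\<^sup>2 + b\<^sup>2)"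
proof -
  have "complex_of_real a * complex_of_real t + complex_of_real b * (\<i> * complex_of_real t) = Complex (a*t) (b*t)"
    by (simp add: complex_eq_iff)
  hence "norm (complex_of_real a * complex_of_real t + complex_of_real b * (\<i> * complex_of_real t)) = sqrt (t\<^sup>2 * (a\<^sup>2 + b\<^sup>2))"
    by (simp add: complex_norm power_mult_distrib algebra_simps)
  also have "\<dots> = \<bar>t\<bar> * sqrt (a\<^sup>2 + b\<^sup>2)" by (simp add: real_sqrt_mult)
  finally show ?thesis .
qed

lemma lim_lower:
  fixes F :: "nat \<Rightarrow> real"
  assumes "filterlim L at_top sequentially" "\<And>k. real (L k) \<le> F k"
  shows "filterlim F at_top sequentially"
proof -
  have "filterlim (\<lambda>k. real (L k)) at_top sequentially"
    by (rule filterlim_compose[OF filterlim_real_sequentially assms(1)])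
  thus ?thesis by (rule filterlim_at_top_mono) (use assms(2) in auto)
qed



theorem theoremA:
  fixes P :: "complex poly" and \<delta> :: complex and \<theta> :: real
  assumes "degree P \<ge> 2"
    and "\<delta> \<noteq> 0"
    and "0 < \<theta>" and "\<theta> < 2 * pi"
    and "\<theta> \<noteq> pi / 2" and "\<theta> \<noteq> pi" and "\<theta> \<noteq> 3 * pi / 2"
  shows "\<exists>U. open U \<and> U \<noteq> {} \<and> \<not> bounded U \<and>
           U \<subseteq> fatou_set (gen_group (henon P \<delta>) (henon2 P \<delta> \<theta>)) \<and>
           (\<forall>z\<in>U. \<forall>\<omega> :: nat \<Rightarrow> letter.
              filterlim (\<lambda>k. length (reduce_word (S_word \<omega> k))) at_top sequentially \<longrightarrow>
              filterlim (\<lambda>k. norm (S_map P \<delta> \<theta> \<omega> k z)) at_top sequentially)"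
proof -
  note degP = assms(1) and d = assms(2)
  have s0: "sin \<theta> \<noteq> 0" using sin_nz assms by blast
  have c0: "cos \<theta> \<noteq> 0" using cos_nz assms by blast
  define m where "m = min \<bar>cos \<theta>\<bar> \<bar>sin \<theta>\<bar>"
  define e where "e = m / 2"
  define K where "K = 4 / m"
  have mpos: "m > 0" using s0 c0 m_def by auto
  have m1: "m \<le> 1" using m_def abs_cos_le_one[of \<theta>] by linarith
  have epos: "e > 0" using mpos e_def by simp
  have Kpos: "K > 0" using mpos K_def by simp
  have K1: "K > 1" using mpos m1 K_def by (simp add: less_divide_eq)
  define B1 where "B1 = max (1/e) (2*(K+1)) + norm \<delta> * K"
  define B2 where "B2 = max (1/e) (2*(K+1)) + norm (1/\<delta>) * K"
  obtain Y1 where Y1: "Y1 \<ge> 1" "\<And>y. Y1 \<le> norm y \<Longrightarrow> B1 * norm y \<le> norm (poly P y)"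
    using poly_growth[OF degP, of B1] by blast
  have degP2: "degree (smult (1/\<delta>) P) \<ge> 2" using degP d by simp
  obtain Y2 where Y2: "Y2 \<ge> 1" "\<And>y. Y2 \<le> norm y \<Longrightarrow> B2 * norm y \<le> norm (poly (smult (1/\<delta>) P) y)"
    using poly_growth[OF degP2, of B2] by blast
  define r where "r = (K+1) * max Y1 Y2"
  have rK: "r / (K+1) = max Y1 Y2" using Kpos r_def by simp
  have r1: "r \<ge> 1"
  proof -
    have "1 * 1 \<le> (K+1) * max Y1 Y2" using Kpos Y1(1) by (intro mult_mono) auto
    thus ?thesis using r_def by simp
  qed
  have gr1: "\<And>y. r / (K+1) \<le> norm y \<Longrightarrow> (max (1/e) (2*(K+1)) + norm \<delta> * K) * norm y \<le> norm (poly P y)"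
    using Y1(2) rK B1_def by simp
  have gr2: "\<And>y. r / (K+1) \<le> norm y \<Longrightarrow> (max (1/e) (2*(K+1)) + norm (1/\<delta>) * K) * norm y \<le> norm (poly (smult (1/\<delta>) P) y)"
    using Y2(2) rK B2_def by simp
  have stepA: "\<And>l z. G1 K r (T \<theta> l z) \<Longrightarrow>
        G1 e r (T \<theta> l (letter_map P \<delta> \<theta> l z)) \<and> 2 * norm z \<le> norm (letter_map P \<delta> \<theta> l z)"
    using step[OF d Kpos epos gr1 gr2] by blast
  have compatA: "\<And>a b z. a \<noteq> letter_inverse b \<Longrightarrow> G1 e r (T \<theta> b z) \<Longrightarrow> G1 K r (T \<theta> a z)"
    using compat[OF s0 c0 m_def] unfolding e_def K_def by blast
  define c where "c = complex_of_real (cos \<theta>)"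
  define s where "s = complex_of_real (sin \<theta>)"
  define U where "U = {z :: C2. r < norm z \<and> norm (fst z) < K * norm (snd z) \<and> norm (snd z) < K * norm (fst z)
      \<and> norm (c * fst z - s * snd z) < K * norm (s * fst z + c * snd z)
      \<and> norm (s * fst z + c * snd z) < K * norm (c * fst z - s * snd z)}"
  have goodU: "G1 K r (T \<theta> l z)" if "z \<in> U" for l z
  proof -
    obtain x y where z: "z = (x,y)" by (cases z)
    have nT: "r \<le> norm (T \<theta> l z)" using that unfolding norm_T U_def by simp
    have "norm (fst (T \<theta> l z)) \<le> K * norm (snd (T \<theta> l z))" using that unfolding U_def z
      by (cases l) (auto simp: T_def sw_def rot_def c_def s_def)
    thus ?thesis using nT by (simp add: G1_def)
  qed
  have lower: "real (length (reduce_word w)) \<le> norm (word_map P \<delta> \<theta> w z)" if "z \<in> U" for w z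
  proof -
    have "2 ^ length (reduce_word w) * norm z \<le> norm (word_map P \<delta> \<theta> (reduce_word w) z)"
      by (rule chain_all[OF stepA compatA goodU[OF that] reduce_reduced])
    hence "2 ^ length (reduce_word w) * norm z \<le> norm (word_map P \<delta> \<theta> w z)"
      by (simp add: word_map_reduce[OF d])
    moreover have "real (length (reduce_word w)) \<le> 2 ^ length (reduce_word w)"
      by (metis of_nat_le_iff of_nat_numeral of_nat_power less_exp less_imp_le)
    moreover have "(2::real) ^ length (reduce_word w) \<le> 2 ^ length (reduce_word w) * norm z"
      using that r1 unfolding U_def by (simp add: mult_le_cancel_left1)
    ultimately show ?thesis by linarith
  qed
  define pt where "pt = (\<lambda>t::real. (complex_of_real t, \<i> * complex_of_real t))"
  have ptU: "pt t \<in> U" if "t > r" for t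
  proof -
    have t0: "t > 0" using that r1 by simp
    have cs: "sqrt ((cos \<theta>)\<^sup>2 + (sin \<theta>)\<^sup>2) = 1" by simp
    have n1: "norm (fst (pt t)) = t" "norm (snd (pt t)) = t" using t0 by (simp_all add: pt_def norm_mult)
    have n3: "norm (c * fst (pt t) - s * snd (pt t)) = t"
      using norm_pt1[of "cos \<theta>" t "sin \<theta>"] t0 cs by (simp add: pt_def c_def s_def)
    have n4: "norm (s * fst (pt t) + c * snd (pt t)) = t"
      using norm_pt2[of "sin \<theta>" t "cos \<theta>"] t0 cs by (simp add: pt_def c_def s_def add.commute)
    have "t \<le> norm (pt t)" using norm_fst_le[of "fst (pt t)" "snd (pt t)"] n1 by simp
    moreover have "t < K * t" using K1 t0 by simp
    ultimately show ?thesis unfolding U_def using n1 n3 n4 that by simp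
  qed
  have openU: "open U"
    unfolding U_def by (intro open_Collect_conj open_Collect_less continuous_intros)
  have neU: "U \<noteq> {}" using ptU[of "r+1"] by auto
  have unbU: "\<not> bounded U"
  proof
    assume "bounded U"
    then obtain B where B: "\<And>z. z \<in> U \<Longrightarrow> norm z \<le> B" by (auto simp: bounded_iff)
    define t where "t = max (r+1) (B+1)"
    have "pt t \<in> U" using ptU t_def by simp
    hence "norm (pt t) \<le> B" by (rule B)
    moreover have "t \<le> norm (pt t)" using norm_fst_le[of "fst (pt t)" "snd (pt t)"] r1
      by (simp add: pt_def t_def)
    ultimately show False unfolding t_def by linarith
  qed
  have normal: "normal_family_on (gen_group (henon P \<delta>) (henon2 P \<delta> \<theta>)) U"
    unfolding normal_family_on_def
  proof (intro allI impI)
    fix f :: "nat \<Rightarrow> C2 \<Rightarrow> C2"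
    assume fG: "\<forall>n. f n \<in> gen_group (henon P \<delta>) (henon2 P \<delta> \<theta>)"
    have "\<forall>n. \<exists>w. f n = word_map P \<delta> \<theta> w" using fG gen_group_word by blast
    then obtain W where W: "\<And>n. f n = word_map P \<delta> \<theta> (W n)" by metis
    define L where "L = (\<lambda>n. length (reduce_word (W n)))"
    show "\<exists>r. strict_mono r \<and>
           ((\<exists>g. \<forall>K. compact K \<and> K \<subseteq> U \<longrightarrow> uniform_limit K (\<lambda>n. f (r n)) g sequentially)
            \<or> (\<forall>K. compact K \<and> K \<subseteq> U \<longrightarrow>
                  (\<forall>M. eventually (\<lambda>n. \<forall>z\<in>K. norm (f (r n) z) \<ge> M) sequentially)))"
    proof (cases "filterlim L at_top sequentially")
      case True
      have "\<forall>K'. compact K' \<and> K' \<subseteq> U \<longrightarrow>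
                  (\<forall>M. eventually (\<lambda>n. \<forall>z\<in>K'. norm (f (id n) z) \<ge> M) sequentially)"
      proof (intro allI impI)
        fix K' :: "C2 set" and M :: real
        assume K': "compact K' \<and> K' \<subseteq> U"
        have "eventually (\<lambda>n. nat \<lceil>M\<rceil> \<le> L n) sequentially"
          using True[unfolded filterlim_at_top, rule_format, of "nat \<lceil>M\<rceil>"] .
        then show "eventually (\<lambda>n. \<forall>z\<in>K'. norm (f (id n) z) \<ge> M) sequentially"
        proof (rule eventually_mono)
          fix n assume n: "nat \<lceil>M\<rceil> \<le> L n"
          show "\<forall>z\<in>K'. norm (f (id n) z) \<ge> M"
          proof
            fix z assume "z \<in> K'"
            hence zU: "z \<in> U" using K' by auto
            have "M \<le> real (nat \<lceil>M\<rceil>)" by linarith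
            also have "\<dots> \<le> real (L n)" using n by simp
            also have "\<dots> \<le> norm (f (id n) z)" using lower[OF zU, of "W n"] W L_def by simp
            finally show "norm (f (id n) z) \<ge> M" .
          qed
        qed
      qed
      then show ?thesis using strict_mono_id by blast
    next
      case False
      then obtain Z where "\<not> eventually (\<lambda>n. Z \<le> L n) sequentially"
        by (auto simp: filterlim_at_top)
      hence infS: "infinite {n. \<not> Z \<le> L n}"
        by (simp add: cofinite_eq_sequentially[symmetric] eventually_cofinite)
      define S where "S = {n. \<not> Z \<le> L n}"
      have "(\<lambda>n. reduce_word (W n)) ` S \<subseteq> {xs. set xs \<subseteq> UNIV \<and> length xs \<le> Z}"
        using S_def L_def by auto
      hence fin: "finite ((\<lambda>n. reduce_word (W n)) ` S)"
        by (rule finite_subset) (rule finite_lists_length_le[OF finite_letter])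
      obtain n0 where n0: "n0 \<in> S" "infinite {n\<in>S. reduce_word (W n) = reduce_word (W n0)}"
        using pigeonhole_infinite[OF infS[folded S_def] fin] by blast
      obtain rr :: "nat \<Rightarrow> nat" where rr: "strict_mono rr" "\<And>n. rr n \<in> {n\<in>S. reduce_word (W n) = reduce_word (W n0)}"
        using infinite_enumerate[OF n0(2)] by blast
      have const: "(\<lambda>n. f (rr n)) = (\<lambda>n. f n0)"
      proof
        fix n
        have "f (rr n) = word_map P \<delta> \<theta> (reduce_word (W (rr n)))" using W word_map_reduce[OF d] by simp
        also have "\<dots> = word_map P \<delta> \<theta> (reduce_word (W n0))" using rr(2)[of n] by simp
        also have "\<dots> = f n0" using W word_map_reduce[OF d] by simp
        finally show "f (rr n) = f n0" .
      qed
      have "\<forall>K'. compact K' \<and> K' \<subseteq> U \<longrightarrow> uniform_limit K' (\<lambda>n. f (rr n)) (f n0) sequentially"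
        unfolding const by (auto intro: uniform_limit_const)
      then show ?thesis using rr(1) by blast
    qed
  qed
  have fat: "U \<subseteq> fatou_set (gen_group (henon P \<delta>) (henon2 P \<delta> \<theta>))"
    unfolding fatou_set_def using openU normal by blast
  have esc: "\<forall>z\<in>U. \<forall>\<omega> :: nat \<Rightarrow> letter.
              filterlim (\<lambda>k. length (reduce_word (S_word \<omega> k))) at_top sequentially \<longrightarrow>
              filterlim (\<lambda>k. norm (S_map P \<delta> \<theta> \<omega> k z)) at_top sequentially"
  proof (intro ballI allI impI)
    fix z \<omega> assume zU: "z \<in> U"
      and lim: "filterlim (\<lambda>k. length (reduce_word (S_word \<omega> k))) at_top sequentially"
    show "filterlim (\<lambda>k. norm (S_map P \<delta> \<theta> \<omega> k z)) at_top sequentially"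
      by (rule lim_lower[OF lim]) (simp add: S_map_word lower[OF zU])
  qed
  show ?thesis using openU neU unbU fat esc by blast
qed


end
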